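(* Let $H\subset G$ be compact Lie groups with Lie algebras $\mathfrak{h}\subset\mathfrak{g}$, let $g_0$ be a bi-invariant metric on $G$, and let $\mathfrak{p}$ be the $g_0$-orthogonal complement of $\mathfrak{h}$ in $\mathfrak{g}$. Let $g$ be a $G$-invariant metric on $G/H$ with nonnegative sectional curvature, corresponding to the $\mathrm{Ad}_H$-invariant inner product $g(A,B)=g_0(\Phi A,B)$ on $\mathfrak{p}$, where $\Phi$ is a $g_0$-self-adjoint, positive definite, $\mathrm{Ad}_H$-equivariant endomorphism of $\mathfrak{p}$. For $s\in[0,1]$ let $g(s)$ be the $G$-invariant metric on $G/H$ given by $g(s)(A,B)=g_0(\Phi_sA,B)$ with $\Phi_s^{-1}=(1-s)I+s\,\Phi^{-1}$ (the inverse-linear path from $g(0)=g_0|_{\mathfrak{p}}$ to $g(1)=g$). Then $g(s)$ has nonnegative sectional curvature for every $s\in[0,1]$.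
   Context: $G$-invariant metrics on $G/H$ are identified with $\mathrm{Ad}_H$-invariant inner products on $\mathfrak{p}\cong T_H(G/H)$. A path of inner products on $\mathfrak{p}$ is called inverse-linear if the inverses of the associated self-adjoint (with respect to $g_0$) endomorphisms depend linearly on the parameter. *)

theory Defs
  imports "HOL-Analysis.Analysis"
begin

text \<open>Lie-algebraic model of a reductive homogeneous space G/H.
  The type 'g is the Lie algebra of G; its inner product is the bi-invariant
  metric g0; br is the Lie bracket; h is the Lie algebra of H;
  p is the g0-orthogonal complement of h.\<close>

definition lie_bracket :: "('g::real_vector \<Rightarrow> 'g \<Rightarrow> 'g) \<Rightarrow> bool" where
  "lie_bracket br \<longleftrightarrow> bilinear br \<and> (\<forall>X. br X X = 0) \<and>
     (\<forall>X Y Z. br X (br Y Z) + br Y (br Z X) + br Z (br X Y) = 0)"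

text \<open>Bi-invariance of g0 at the Lie algebra level: ad-invariance.\<close>
definition ad_invariant :: "('g::real_inner \<Rightarrow> 'g \<Rightarrow> 'g) \<Rightarrow> bool" where
  "ad_invariant br \<longleftrightarrow> (\<forall>X Y Z. inner (br X Y) Z = inner X (br Y Z))"

definition ortho_compl :: "'g::real_inner set \<Rightarrow> 'g set" where
  "ortho_compl h = {X. \<forall>Y\<in>h. inner X Y = 0}"

definition proj_p :: "'g::real_inner set \<Rightarrow> 'g \<Rightarrow> 'g" where
  "proj_p h X = (THE Y. Y \<in> ortho_compl h \<and> X - Y \<in> h)"

definition proj_h :: "'g::real_inner set \<Rightarrow> 'g \<Rightarrow> 'g" where
  "proj_h h X = X - proj_p h X"

definition met :: "('g::real_inner \<Rightarrow> 'g) \<Rightarrow> 'g \<Rightarrow> 'g \<Rightarrow> real" where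
  "met Phi A B = inner (Phi A) B"

definition U_tensor :: "('g::real_inner \<Rightarrow> 'g \<Rightarrow> 'g) \<Rightarrow> 'g set \<Rightarrow> ('g \<Rightarrow> 'g) \<Rightarrow> 'g \<Rightarrow> 'g \<Rightarrow> 'g" where
  "U_tensor br h Phi X Y = (THE W. W \<in> ortho_compl h \<and>
     (\<forall>Z\<in>ortho_compl h. 2 * met Phi W Z =
        met Phi (proj_p h (br Z X)) Y + met Phi X (proj_p h (br Z Y))))"

text \<open>Nomizu map of the Levi-Civita connection of the G-invariant metric:
  Lambda(X)Y = 1/2 [X,Y]_p + U(X,Y).\<close>
definition nomizu :: "('g::real_inner \<Rightarrow> 'g \<Rightarrow> 'g) \<Rightarrow> 'g set \<Rightarrow> ('g \<Rightarrow> 'g) \<Rightarrow> 'g \<Rightarrow> 'g \<Rightarrow> 'g" where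
  "nomizu br h Phi X Y = (1/2) *\<^sub>R proj_p h (br X Y) + U_tensor br h Phi X Y"

text \<open>Riemann curvature tensor at the origin (Kobayashi--Nomizu II, Ch. X):
  R(X,Y) = [Lambda X, Lambda Y] - Lambda([X,Y]_p) - ad([X,Y]_h).\<close>
definition curv :: "('g::real_inner \<Rightarrow> 'g \<Rightarrow> 'g) \<Rightarrow> 'g set \<Rightarrow> ('g \<Rightarrow> 'g) \<Rightarrow> 'g \<Rightarrow> 'g \<Rightarrow> 'g \<Rightarrow> 'g" where
  "curv br h Phi X Y Z =
     nomizu br h Phi X (nomizu br h Phi Y Z) - nomizu br h Phi Y (nomizu br h Phi X Z)
     - nomizu br h Phi (proj_p h (br X Y)) Z - br (proj_h h (br X Y)) Z"

definition sec_curv :: "('g::real_inner \<Rightarrow> 'g \<Rightarrow> 'g) \<Rightarrow> 'g set \<Rightarrow> ('g \<Rightarrow> 'g) \<Rightarrow> 'g \<Rightarrow> 'g \<Rightarrow> real" where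
  "sec_curv br h Phi X Y =
     met Phi (curv br h Phi X Y Y) X /
     (met Phi X X * met Phi Y Y - (met Phi X Y)^2)"

text \<open>Nonnegative sectional curvature of the G-invariant metric (checked at the
  origin, which suffices by homogeneity): all planes spanned by X,Y in p.\<close>
definition nonneg_sec :: "('g::real_inner \<Rightarrow> 'g \<Rightarrow> 'g) \<Rightarrow> 'g set \<Rightarrow> ('g \<Rightarrow> 'g) \<Rightarrow> bool" where
  "nonneg_sec br h Phi \<longleftrightarrow>
     (\<forall>X\<in>ortho_compl h. \<forall>Y\<in>ortho_compl h. independent {X, Y} \<and> X \<noteq> Y \<longrightarrow>
        sec_curv br h Phi X Y \<ge> 0)"

definition restr_inv :: "'g::real_vector set \<Rightarrow> ('g \<Rightarrow> 'g) \<Rightarrow> 'g \<Rightarrow> 'g" where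
  "restr_inv p f = (\<lambda>x. if x \<in> p then inv_into p f x else 0)"

definition inv_lin_path :: "'g::real_vector set \<Rightarrow> ('g \<Rightarrow> 'g) \<Rightarrow> real \<Rightarrow> 'g \<Rightarrow> 'g" where
  "inv_lin_path p Phi s = restr_inv p (\<lambda>X. (1 - s) *\<^sub>R X + s *\<^sub>R restr_inv p Phi X)"

end

theory Submission
  imports Defs
begin

locale LA =
  fixes br :: "'g::euclidean_space \<Rightarrow> 'g \<Rightarrow> 'g" and h :: "'g set"
  assumes lie: "lie_bracket br"
    and biinv: "ad_invariant br"
    and h_sub: "subspace h"
    and h_alg: "\<forall>X\<in>h. \<forall>Y\<in>h. br X Y \<in> h"
begin

abbreviation "p \<equiv> ortho_compl h"
abbreviation "pp \<equiv> proj_p h"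

lemma bil: "bilinear br" using lie by (simp add: lie_bracket_def)
lemma br_self[simp]: "br X X = 0" using lie by (simp add: lie_bracket_def)
lemma jacobi: "br X (br Y Z) + br Y (br Z X) + br Z (br X Y) = 0"
  using lie by (simp add: lie_bracket_def)
lemma adinv: "inner (br X Y) Z = inner X (br Y Z)" using biinv by (simp add: ad_invariant_def)

lemma br_ladd[simp]: "br (x + y) z = br x z + br y z" by (rule bilinear_ladd[OF bil])
lemma br_radd[simp]: "br x (y + z) = br x y + br x z" by (rule bilinear_radd[OF bil])
lemma br_lmul[simp]: "br (c *\<^sub>R x) y = c *\<^sub>R br x y" by (rule bilinear_lmul[OF bil])
lemma br_rmul[simp]: "br x (c *\<^sub>R y) = c *\<^sub>R br x y" by (rule bilinear_rmul[OF bil])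
lemma br_lneg[simp]: "br (- x) y = - br x y" by (rule bilinear_lneg[OF bil])
lemma br_rneg[simp]: "br x (- y) = - br x y" by (rule bilinear_rneg[OF bil])
lemma br_lsub[simp]: "br (x - y) z = br x z - br y z" by (rule bilinear_lsub[OF bil])
lemma br_rsub[simp]: "br x (y - z) = br x y - br x z" by (rule bilinear_rsub[OF bil])
lemma br_lzero[simp]: "br 0 y = 0" by (rule bilinear_lzero[OF bil])
lemma br_rzero[simp]: "br x 0 = 0" by (rule bilinear_rzero[OF bil])

lemma br_anti: "br Y X = - br X Y"
proof -
  have "br X Y + br Y X = br (X+Y) (X+Y)" unfolding br_ladd br_radd by simp
  also have "\<dots> = 0" by (rule br_self)
  finally have "br X Y + br Y X = 0" .
  then show ?thesis by (metis minus_unique)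
qed

lemma inner_self_br[simp]: "inner X (br X W) = 0"
proof -
  have "inner (br X X) W = inner X (br X W)" by (rule adinv)
  then show ?thesis by simp
qed

lemma cyc: "inner (br a b) c = inner (br b c) a"
  by (subst adinv) (rule inner_commute)

lemma h0: "0 \<in> h" using h_sub by (simp add: subspace_0)
lemma h_add: "a \<in> h \<Longrightarrow> b \<in> h \<Longrightarrow> a + b \<in> h" using h_sub by (simp add: subspace_add)
lemma h_scale: "a \<in> h \<Longrightarrow> c *\<^sub>R a \<in> h" using h_sub by (simp add: subspace_scale)
lemma h_diff: "a \<in> h \<Longrightarrow> b \<in> h \<Longrightarrow> a - b \<in> h" using h_sub by (simp add: subspace_diff)

lemma p_sub: "subspace p"
  unfolding subspace_def ortho_compl_def by (auto simp: inner_add_left)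
lemma p0[simp]: "0 \<in> p" using p_sub by (simp add: subspace_0)
lemma p_add: "a \<in> p \<Longrightarrow> b \<in> p \<Longrightarrow> a + b \<in> p" using p_sub by (simp add: subspace_add)
lemma p_scale: "a \<in> p \<Longrightarrow> c *\<^sub>R a \<in> p" using p_sub by (simp add: subspace_scale)
lemma p_diff: "a \<in> p \<Longrightarrow> b \<in> p \<Longrightarrow> a - b \<in> p" using p_sub by (simp add: subspace_diff)
lemma p_neg: "a \<in> p \<Longrightarrow> - a \<in> p" using p_sub by (simp add: subspace_neg)

lemma p_h_zero: "v \<in> p \<Longrightarrow> v \<in> h \<Longrightarrow> v = 0"
  unfolding ortho_compl_def by auto

lemma inner_ph: "v \<in> p \<Longrightarrow> z \<in> h \<Longrightarrow> inner v z = 0"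
  unfolding ortho_compl_def by auto

lemma decomp_ex: "\<exists>Y. Y \<in> p \<and> X - Y \<in> h"
proof -
  obtain y z where y: "y \<in> span h" and z: "\<And>w. w \<in> span h \<Longrightarrow> orthogonal z w" and e: "X = y + z"
    using orthogonal_subspace_decomp_exists[of h X] by blast
  have "span h = h" using h_sub by (simp add: span_eq_iff)
  then have "z \<in> p" "X - z \<in> h" using y z e \<open>span h = h\<close> by (auto simp: ortho_compl_def orthogonal_def)
  then show ?thesis by blast
qed

lemma decomp_uniq: "Y1 \<in> p \<Longrightarrow> X - Y1 \<in> h \<Longrightarrow> Y2 \<in> p \<Longrightarrow> X - Y2 \<in> h \<Longrightarrow> Y1 = Y2"
proof -
  assume a: "Y1 \<in> p" "X - Y1 \<in> h" "Y2 \<in> p" "X - Y2 \<in> h"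
  have "Y2 - Y1 \<in> h" using h_diff[OF a(2) a(4)] by simp
  moreover have "Y2 - Y1 \<in> p" using a by (simp add: p_diff)
  ultimately show ?thesis using p_h_zero by fastforce
qed

lemma pp_char: "pp X \<in> p \<and> X - pp X \<in> h"
proof -
  have ex1: "\<exists>!Y. Y \<in> p \<and> X - Y \<in> h" using decomp_ex decomp_uniq by blast
  show ?thesis unfolding proj_p_def by (rule theI'[OF ex1])
qed

lemma pp_in[simp]: "pp X \<in> p" using pp_char by blast
lemma pp_h: "X - pp X \<in> h" using pp_char by blast

lemma pp_eq: "Y \<in> p \<Longrightarrow> X - Y \<in> h \<Longrightarrow> pp X = Y"
  using decomp_uniq pp_char by blast

lemma pp_id: "Y \<in> p \<Longrightarrow> pp Y = Y" by (rule pp_eq) (auto simp: h0)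

lemma pp_add[simp]: "pp (X + Y) = pp X + pp Y"
proof (rule pp_eq)
  show "pp X + pp Y \<in> p" by (simp add: p_add)
  have "X + Y - (pp X + pp Y) = (X - pp X) + (Y - pp Y)" by simp
  then show "X + Y - (pp X + pp Y) \<in> h" using h_add[OF pp_h pp_h] by metis
qed

lemma pp_scale[simp]: "pp (c *\<^sub>R X) = c *\<^sub>R pp X"
proof (rule pp_eq)
  show "c *\<^sub>R pp X \<in> p" by (simp add: p_scale)
  have "c *\<^sub>R X - c *\<^sub>R pp X = c *\<^sub>R (X - pp X)" by (simp add: algebra_simps)
  then show "c *\<^sub>R X - c *\<^sub>R pp X \<in> h" using h_scale[OF pp_h] by metis
qed

lemma pp_neg[simp]: "pp (- X) = - pp X"
  using pp_scale[of "-1" X] by simp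

lemma pp_diff[simp]: "pp (X - Y) = pp X - pp Y"
  using pp_add[of X "-Y"] by simp

lemma pp_inner: "Y \<in> p \<Longrightarrow> inner (pp X) Y = inner X Y"
proof -
  assume "Y \<in> p"
  then have "inner (X - pp X) Y = 0" using inner_ph pp_h by (metis inner_commute)
  then show ?thesis by (simp add: inner_diff_left)
qed

lemma pp_inner2: "Y \<in> p \<Longrightarrow> inner Y (pp X) = inner Y X"
  using pp_inner by (simp add: inner_commute)

lemma ph_in: "proj_h h X \<in> h" by (simp add: proj_h_def pp_h)

lemma br_hp: "Z \<in> h \<Longrightarrow> X \<in> p \<Longrightarrow> br Z X \<in> p"
proof -
  assume a: "Z \<in> h" "X \<in> p"
  have "inner (br Z X) Y = 0" if "Y \<in> h" for Y
  proof -
    have "inner (br Z X) Y = - inner (br X Z) Y" by (simp add: br_anti[of Z X])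
    also have "\<dots> = - inner X (br Z Y)" by (simp add: adinv)
    also have "\<dots> = 0" using inner_ph[OF a(2)] h_alg a(1) that by simp
    finally show ?thesis .
  qed
  then show ?thesis by (simp add: ortho_compl_def)
qed

definition lin_on :: "('g \<Rightarrow> 'g) \<Rightarrow> bool" where "lin_on T \<longleftrightarrow> (\<forall>X\<in>p. \<forall>Y\<in>p. T (X + Y) = T X + T Y) \<and> (\<forall>X\<in>p. \<forall>c. T (c *\<^sub>R X) = c *\<^sub>R T X)"
definition maps :: "('g \<Rightarrow> 'g) \<Rightarrow> bool" where "maps T \<longleftrightarrow> (\<forall>X\<in>p. T X \<in> p)"
definition sa :: "('g \<Rightarrow> 'g) \<Rightarrow> bool" where "sa T \<longleftrightarrow> (\<forall>X\<in>p. \<forall>Y\<in>p. inner (T X) Y = inner X (T Y))"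
definition pos :: "('g \<Rightarrow> 'g) \<Rightarrow> bool" where "pos T \<longleftrightarrow> (\<forall>X\<in>p. X \<noteq> 0 \<longrightarrow> inner (T X) X > 0)"
definition eqv :: "('g \<Rightarrow> 'g) \<Rightarrow> bool" where "eqv T \<longleftrightarrow> (\<forall>Z\<in>h. \<forall>X\<in>p. T (br Z X) = br Z (T X))"
definition invp :: "('g \<Rightarrow> 'g) \<Rightarrow> ('g \<Rightarrow> 'g) \<Rightarrow> bool" where "invp T N \<longleftrightarrow> maps T \<and> maps N \<and> (\<forall>X\<in>p. T (N X) = X \<and> N (T X) = X)"

lemma lin_add: "lin_on T \<Longrightarrow> X \<in> p \<Longrightarrow> Y \<in> p \<Longrightarrow> T (X + Y) = T X + T Y"
  by (simp add: lin_on_def)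
lemma lin_scale: "lin_on T \<Longrightarrow> X \<in> p \<Longrightarrow> T (c *\<^sub>R X) = c *\<^sub>R T X"
  by (simp add: lin_on_def)
lemma lin_zero: "lin_on T \<Longrightarrow> T 0 = 0"
  using lin_scale[of T 0 0] by simp
lemma lin_neg: "lin_on T \<Longrightarrow> X \<in> p \<Longrightarrow> T (- X) = - T X"
  using lin_scale[of T X "-1"] by simp
lemma lin_diff: "lin_on T \<Longrightarrow> X \<in> p \<Longrightarrow> Y \<in> p \<Longrightarrow> T (X - Y) = T X - T Y"
  using lin_add[of T X "-Y"] lin_neg[of T Y] by (simp add: p_neg)

lemma maps_in: "maps T \<Longrightarrow> X \<in> p \<Longrightarrow> T X \<in> p" by (simp add: maps_def)

lemma construct:
  assumes m: "maps T" and l: "lin_on T" and ps: "pos T"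
  shows "invp T (restr_inv p T)"
proof -
  have inj: "inj_on T p"
  proof (rule inj_onI)
    fix a b assume ab: "a \<in> p" "b \<in> p" "T a = T b"
    have "T (a - b) = 0" using ab l by (simp add: lin_diff)
    then show "a = b" using ps ab p_diff unfolding pos_def by fastforce
  qed
  define T' where "T' X = T (pp X) + (X - pp X)" for X
  have lT': "linear T'"
  proof (rule linearI)
    fix x y :: 'g and c :: real
    show "T' (x + y) = T' x + T' y" unfolding T'_def using l by (simp add: lin_add algebra_simps)
    show "T' (c *\<^sub>R x) = c *\<^sub>R T' x" unfolding T'_def using l by (simp add: lin_scale algebra_simps)
  qed
  have iT': "inj T'"
  proof (rule linear_injective_0[OF lT', THEN iffD2], intro allI impI)
    fix x assume "T' x = 0"
    then have "T (pp x) + (x - pp x) = 0" unfolding T'_def .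
    then have e: "T (pp x) = - (x - pp x)" by (metis minus_unique minus_minus)
    have "T (pp x) \<in> p" using m by (simp add: maps_in)
    moreover have "T (pp x) \<in> h" using e h_scale[OF pp_h, of "-1" x] by simp
    ultimately have "T (pp x) = 0" by (rule p_h_zero)
    then have "pp x = 0" using ps unfolding pos_def by fastforce
    then show "x = 0" using e \<open>T (pp x) = 0\<close> by simp
  qed
  have surj: "\<exists>x\<in>p. T x = y" if y: "y \<in> p" for y
  proof -
    obtain x where x: "T' x = y" using linear_injective_imp_surjective[OF lT' iT'] by (metis surjD)
    have "x - pp x = y - T (pp x)" using x unfolding T'_def by (simp add: algebra_simps)
    moreover have "y - T (pp x) \<in> p" using y m by (simp add: maps_in p_diff)
    ultimately have "x - pp x = 0" using p_h_zero pp_h by metis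
    then have "T (pp x) = y" using x unfolding T'_def by simp
    then show ?thesis using pp_in by blast
  qed
  show ?thesis unfolding invp_def
  proof (intro conjI ballI)
    show "maps T" by fact
    show "maps (restr_inv p T)" unfolding maps_def restr_inv_def
      using surj by (auto intro: inv_into_into)
    fix X assume X: "X \<in> p"
    show "T (restr_inv p T X) = X" unfolding restr_inv_def using X surj
      by (auto intro!: f_inv_into_f)
    show "restr_inv p T (T X) = X" unfolding restr_inv_def using X m inj
      by (simp add: maps_in inv_into_f_f)
  qed
qed

lemma invp_sym: "invp T N \<Longrightarrow> invp N T" by (auto simp: invp_def)

lemma invp_lin: assumes i: "invp T N" and l: "lin_on T" shows "lin_on N"
proof -
  have m: "maps T" "maps N" and inv: "\<And>X. X \<in> p \<Longrightarrow> T (N X) = X \<and> N (T X) = X"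
    using i by (auto simp: invp_def)
  have "N (X + Y) = N X + N Y" if "X \<in> p" "Y \<in> p" for X Y
  proof -
    have "T (N X + N Y) = X + Y" using that m l inv by (simp add: lin_add maps_in)
    then have "N (T (N X + N Y)) = N (X + Y)" by simp
    then show ?thesis using inv that m by (metis maps_in p_add)
  qed
  moreover have "N (c *\<^sub>R X) = c *\<^sub>R N X" if "X \<in> p" for X c
  proof -
    have "T (c *\<^sub>R N X) = c *\<^sub>R X" using that m l inv by (simp add: lin_scale maps_in)
    then show ?thesis using inv that m by (metis maps_in p_scale)
  qed
  ultimately show ?thesis by (simp add: lin_on_def)
qed

lemma invp_sa: assumes i: "invp T N" and s: "sa T" shows "sa N"
proof -
  have m: "maps T" "maps N" and inv: "\<And>X. X \<in> p \<Longrightarrow> T (N X) = X \<and> N (T X) = X"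
    using i by (auto simp: invp_def)
  show ?thesis unfolding sa_def
  proof (intro ballI)
    fix X Y assume XY: "X \<in> p" "Y \<in> p"
    have "inner (N X) Y = inner (N X) (T (N Y))" using inv XY by simp
    also have "\<dots> = inner (T (N X)) (N Y)" using s XY m by (simp add: sa_def maps_in)
    also have "\<dots> = inner X (N Y)" using inv XY by simp
    finally show "inner (N X) Y = inner X (N Y)" .
  qed
qed

lemma invp_pos: assumes i: "invp T N" and l: "lin_on T" and ps: "pos T" shows "pos N"
proof -
  have m: "maps T" "maps N" and inv: "\<And>X. X \<in> p \<Longrightarrow> T (N X) = X \<and> N (T X) = X"
    using i by (auto simp: invp_def)
  show ?thesis unfolding pos_def
  proof (intro ballI impI)
    fix X assume X: "X \<in> p" "X \<noteq> 0"
    have "N X \<noteq> 0" using inv X lin_zero[OF l] by metis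
    then have "inner (T (N X)) (N X) > 0" using ps X m by (simp add: pos_def maps_in)
    then show "inner (N X) X > 0" using inv X by (simp add: inner_commute)
  qed
qed

lemma invp_eqv: assumes i: "invp T N" and e: "eqv T" shows "eqv N"
proof -
  have m: "maps T" "maps N" and inv: "\<And>X. X \<in> p \<Longrightarrow> T (N X) = X \<and> N (T X) = X"
    using i by (auto simp: invp_def)
  show ?thesis unfolding eqv_def
  proof (intro ballI)
    fix Z X assume ZX: "Z \<in> h" "X \<in> p"
    have "T (br Z (N X)) = br Z X" using e ZX m inv by (simp add: eqv_def maps_in)
    then have "N (T (br Z (N X))) = N (br Z X)" by simp
    then show "N (br Z X) = br Z (N X)" using inv ZX m br_hp by (metis maps_in)
  qed
qed

definition good :: "('g \<Rightarrow> 'g) \<Rightarrow> ('g \<Rightarrow> 'g) \<Rightarrow> bool" where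
  "good T N \<longleftrightarrow> invp T N \<and> lin_on T \<and> sa T \<and> pos T \<and> eqv T"

definition Uf :: "('g \<Rightarrow> 'g) \<Rightarrow> ('g \<Rightarrow> 'g) \<Rightarrow> 'g \<Rightarrow> 'g \<Rightarrow> 'g" where
  "Uf T N X Y = (1/2) *\<^sub>R N (pp (br X (T Y) + br Y (T X)))"

definition F :: "('g \<Rightarrow> 'g) \<Rightarrow> ('g \<Rightarrow> 'g) \<Rightarrow> 'g \<Rightarrow> 'g \<Rightarrow> real" where
  "F T N X Y = (1/4) * inner (N (pp (br X (T Y) + br Y (T X)))) (br X (T Y) + br Y (T X))
     - inner (N (pp (br Y (T Y)))) (br X (T X))
     - (3/4) * inner (T (pp (br X Y))) (pp (br X Y))
     + (1/2) * inner (br X Y) (br X (T Y) - br Y (T X))"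

context
  fixes T N assumes g: "good T N"
begin

lemma gi: "invp T N" and gl: "lin_on T" and gs: "sa T" and gp: "pos T" and ge: "eqv T"
  using g by (auto simp: good_def)
lemma gm: "X \<in> p \<Longrightarrow> T X \<in> p" "X \<in> p \<Longrightarrow> N X \<in> p"
  using gi by (auto simp: invp_def maps_def)
lemma ginv: "X \<in> p \<Longrightarrow> T (N X) = X" "X \<in> p \<Longrightarrow> N (T X) = X"
  using gi by (auto simp: invp_def)
lemma gNl: "lin_on N" using invp_lin[OF gi gl] .
lemma gNs: "sa N" using invp_sa[OF gi gs] .
lemma gsa: "X \<in> p \<Longrightarrow> Y \<in> p \<Longrightarrow> inner (T X) Y = inner X (T Y)"
  using gs by (simp add: sa_def)
lemma geq: "Z \<in> h \<Longrightarrow> X \<in> p \<Longrightarrow> T (br Z X) = br Z (T X)"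
  using ge by (simp add: eqv_def)

lemma Uf_in: "Uf T N X Y \<in> p" unfolding Uf_def by (intro p_scale gm(2) pp_in)

lemma U_eq: assumes X: "X \<in> p" and Y: "Y \<in> p" shows "U_tensor br h T X Y = Uf T N X Y"
proof -
  let ?P = "\<lambda>W. W \<in> p \<and> (\<forall>Z\<in>p. 2 * met T W Z =
        met T (pp (br Z X)) Y + met T X (pp (br Z Y)))"
  have rhs: "met T (pp (br Z X)) Y + met T X (pp (br Z Y)) = inner (br X (T Y) + br Y (T X)) Z"
    if Z: "Z \<in> p" for Z
  proof -
    have "met T (pp (br Z X)) Y = inner (br Z X) (T Y)"
      unfolding met_def using gsa[of "pp (br Z X)" Y] Y by (simp add: gm pp_inner)
    also have "\<dots> = inner Z (br X (T Y))" by (simp add: adinv)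
    finally have 1: "met T (pp (br Z X)) Y = inner (br X (T Y)) Z" by (simp add: inner_commute)
    have "met T X (pp (br Z Y)) = inner (br Z Y) (T X)"
      unfolding met_def using X by (simp add: gm pp_inner2 inner_commute)
    also have "\<dots> = inner Z (br Y (T X))" by (simp add: adinv)
    finally have 2: "met T X (pp (br Z Y)) = inner (br Y (T X)) Z" by (simp add: inner_commute)
    show ?thesis using 1 2 by (simp add: inner_add_left)
  qed
  have lhs: "2 * met T (Uf T N X Y) Z = inner (br X (T Y) + br Y (T X)) Z" if Z: "Z \<in> p" for Z
  proof -
    have "T (Uf T N X Y) = (1/2) *\<^sub>R pp (br X (T Y) + br Y (T X))"
      unfolding Uf_def by (simp add: lin_scale[OF gl] gm ginv del: pp_add)
    then show ?thesis unfolding met_def using Z by (simp add: pp_inner del: pp_add)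
  qed
  have PU: "?P (Uf T N X Y)" using Uf_in lhs rhs by simp
  show ?thesis unfolding U_tensor_def
  proof (rule the_equality)
    show "?P (Uf T N X Y)" by (rule PU)
    fix W assume PW: "?P W"
    have W: "W \<in> p" using PW by blast
    have "inner (T (W - Uf T N X Y)) Z = 0" if Z: "Z \<in> p" for Z
    proof -
      have "2 * met T W Z = 2 * met T (Uf T N X Y) Z" using PW PU Z by simp
      then have "inner (T W) Z = inner (T (Uf T N X Y)) Z" unfolding met_def by simp
      then show ?thesis using W Uf_in by (simp add: lin_diff[OF gl] inner_diff_left)
    qed
    then have "inner (T (W - Uf T N X Y)) (W - Uf T N X Y) = 0" using W Uf_in p_diff by blast
    then show "W = Uf T N X Y" using gp W Uf_in p_diff unfolding pos_def by fastforce
  qed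
qed

lemma nom_eq: "X \<in> p \<Longrightarrow> Y \<in> p \<Longrightarrow> nomizu br h T X Y = (1/2) *\<^sub>R pp (br X Y) + Uf T N X Y"
  by (simp add: nomizu_def U_eq)

lemma nom_in: "X \<in> p \<Longrightarrow> Y \<in> p \<Longrightarrow> nomizu br h T X Y \<in> p"
  by (simp add: nom_eq p_add p_scale Uf_in)

lemma Gf: assumes "A \<in> p" "B \<in> p" "C \<in> p"
  shows "inner (nomizu br h T A B) (T C) =
     (1/2) * (inner (br A B) (T C) + inner (br A (T B)) C + inner (br B (T A)) C)"
proof -
  have "inner (N (pp (br A (T B) + br B (T A)))) (T C) = inner (pp (br A (T B) + br B (T A))) C"
    using gsa[of "N (pp (br A (T B) + br B (T A)))" C] assms by (simp add: gm ginv del: pp_add)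
  then show ?thesis using assms
    by (simp add: nom_eq Uf_def inner_add_left pp_inner gm del: pp_add)
qed

lemma Gskew: assumes "A \<in> p" "B \<in> p" "C \<in> p"
  shows "inner (nomizu br h T A B) (T C) = - inner (nomizu br h T A C) (T B)"
proof -
  have 1: "inner (br A B) (T C) = - inner (br A (T C)) B"
    by (simp add: adinv br_anti[of B "T C"])
  have 2: "inner (br A (T B)) C = - inner (br A C) (T B)"
    by (simp add: adinv br_anti[of C "T B"])
  have 3: "inner (br B (T A)) C = - inner (br C (T A)) B"
    by (simp only: cyc[of B "T A" C] br_anti[of "T A" C] inner_minus_left)
  show ?thesis using assms by (simp add: Gf 1 2 3 algebra_simps)
qed

lemma curv_F: assumes X: "X \<in> p" and Y: "Y \<in> p"
  shows "met T (curv br h T X Y Y) X = F T N X Y"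
proof -
  let ?n = "nomizu br h T"
  define W where "W = pp (br X Y)"
  define Zh where "Zh = proj_h h (br X Y)"
  define V1 where "V1 = ?n Y Y"
  define V2 where "V2 = ?n X Y"
  define S where "S = br X (T Y) + br Y (T X)"
  define U where "U = Uf T N X Y"
  have W: "W \<in> p" by (simp add: W_def)
  have Zh: "Zh \<in> h" by (simp add: Zh_def ph_in)
  have WZ: "W + Zh = br X Y" by (simp add: W_def Zh_def proj_h_def)
  have V1: "V1 \<in> p" "V2 \<in> p" using X Y by (simp_all add: V1_def V2_def nom_in)
  have U: "U \<in> p" by (simp add: U_def Uf_in)
  have V1e: "V1 = N (pp (br Y (T Y)))"
    using Y by (simp add: V1_def nom_eq Uf_def pp_id[OF p0] scaleR_2[symmetric] lin_scale[OF gNl] del: pp_add)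
  have V2e: "V2 = (1/2) *\<^sub>R W + U" using X Y by (simp add: V2_def nom_eq W_def U_def)
  have V3e: "?n Y X = - (1/2) *\<^sub>R W + U" using X Y
    by (simp add: nom_eq W_def U_def Uf_def br_anti[of Y X] add.commute)
  have cin: "curv br h T X Y Y \<in> p"
    using X Y W Zh V1 by (simp add: curv_def V1_def V2_def W_def Zh_def nom_in p_diff br_hp ph_in)
  have m: "met T (curv br h T X Y Y) X = inner (curv br h T X Y Y) (T X)"
    unfolding met_def using gsa cin X by blast
  have t1: "inner (?n X V1) (T X) = - inner (N (pp (br Y (T Y)))) (br X (T X))"
  proof -
    have b: "inner (br X (T V1)) X = 0"
      by (simp add: adinv br_anti[of X "T V1"])
    have c: "inner (br V1 (T X)) X = - inner V1 (br X (T X))"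
      by (simp only: cyc[of V1 "T X" X] br_anti[of "T X" X] inner_minus_left, simp add: inner_commute)
    have a: "inner (br X V1) (T X) = - inner V1 (br X (T X))"
      by (simp add: adinv br_anti[of X V1])
    have "inner (?n X V1) (T X) = - inner V1 (br X (T X))" using Gf[OF X V1(1) X] unfolding a b c by simp
    then show ?thesis by (simp add: V1e)
  qed
  have TU: "T U = (1/2) *\<^sub>R pp S" unfolding U_def Uf_def S_def
    by (simp add: lin_scale[OF gl] gm ginv del: pp_add)
  have t2: "inner (?n Y V2) (T X) = (1/4) * inner (T W) W - (1/4) * inner (N (pp S)) S"
  proof -
    have e1: "inner (?n Y V2) (T X) = - inner (?n Y X) (T V2)" using Gskew[OF Y V1(2) X] .
    have TV2: "T V2 = (1/2) *\<^sub>R T W + T U"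
      using W U by (simp add: V2e lin_add[OF gl] lin_scale[OF gl] p_scale)
    have e2: "inner (- (1/2) *\<^sub>R W + U) ((1/2) *\<^sub>R T W + T U) =
       - (1/4) * inner W (T W) - (1/2) * inner W (T U) + (1/2) * inner U (T W) + inner U (T U)"
      by (simp add: inner_add_left inner_add_right algebra_simps)
    have e3: "inner W (T U) = inner U (T W)" using gsa[OF U W] by (simp add: inner_commute)
    have e4: "inner W (T W) = inner (T W) W" by (rule inner_commute)
    have e5: "inner U (T U) = (1/4) * inner (N (pp S)) S"
      unfolding TU by (simp add: U_def Uf_def S_def pp_inner2 gm del: pp_add)
    show ?thesis unfolding e1 TV2 V3e e2 e3 e4 e5 by simp
  qed
  have t3: "inner (?n W Y) (T X) = (1/2) * inner W (br Y (T X) - br X (T Y)) + (1/2) * inner (T W) W"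
  proof -
    have a: "inner (br W Y) (T X) = inner W (br Y (T X))" by (simp add: adinv)
    have b: "inner (br W (T Y)) X = - inner W (br X (T Y))"
      by (simp add: adinv br_anti[of X "T Y"])
    have c: "inner (br Y (T W)) X = inner (T W) W"
    proof -
      have "inner (br Y (T W)) X = inner (T W) (br X Y)"
        by (subst cyc) (rule adinv)
      also have "\<dots> = inner (T W) W" using W by (simp add: W_def gm pp_inner2)
      finally show ?thesis .
    qed
    show ?thesis using W X Y by (simp add: Gf a b c inner_diff_right algebra_simps)
  qed
  have t4: "inner (br Zh Y) (T X) = (1/2) * inner Zh (br Y (T X) - br X (T Y))"
  proof -
    have "inner Zh (br X (T Y)) = inner (br Zh X) (T Y)" by (simp add: adinv)
    also have "\<dots> = inner (T (br Zh X)) Y" using gsa[of "br Zh X" Y] Zh X Y br_hp by simp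
    also have "\<dots> = inner (br Zh (T X)) Y" using geq Zh X by simp
    also have "\<dots> = - inner (T X) (br Zh Y)"
      by (simp add: adinv br_anti[of Zh "T X"])
    also have "inner (T X) (br Zh Y) = inner (br Zh Y) (T X)" by (rule inner_commute)
    also have "\<dots> = inner (br Y (T X)) Zh" by (rule cyc)
    also have "\<dots> = inner Zh (br Y (T X))" by (rule inner_commute)
    finally have e: "inner Zh (br X (T Y)) = - inner Zh (br Y (T X))" .
    have e2: "inner (br Zh Y) (T X) = inner Zh (br Y (T X))" by (rule adinv)
    show ?thesis unfolding e2 inner_diff_right e by simp
  qed
  have "inner (curv br h T X Y Y) (T X) =
     inner (?n X V1) (T X) - inner (?n Y V2) (T X) - inner (?n W Y) (T X) - inner (br Zh Y) (T X)"
    by (simp add: curv_def V1_def V2_def W_def Zh_def inner_diff_left)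
  also have "\<dots> = F T N X Y"
  proof -
    have "inner (br X Y) (br X (T Y) - br Y (T X)) = inner W (br X (T Y) - br Y (T X)) + inner Zh (br X (T Y) - br Y (T X))"
      by (simp add: WZ[symmetric] inner_add_left)
    then show ?thesis unfolding t1 t2 t3 t4 F_def S_def W_def[symmetric]
      by (simp add: inner_diff_right algebra_simps)
  qed
  finally show ?thesis using m by simp
qed

lemma F_self: assumes X: "X \<in> p" shows "F T N X X = 0"
proof -
  have "N (pp (br X (T X) + br X (T X))) = 2 *\<^sub>R N (pp (br X (T X)))"
    by (simp add: scaleR_2[symmetric] lin_scale[OF gNl] del: pp_add)
  then show ?thesis unfolding F_def by (simp add: pp_id[OF p0] inner_add_right)
qed

lemma F_scale1: assumes X: "X \<in> p" and Y: "Y \<in> p" shows "F T N (c *\<^sub>R X) Y = c^2 * F T N X Y"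
  unfolding F_def using X Y
  by (simp add: lin_scale[OF gl] lin_scale[OF gNl] lin_add[OF gNl] gm p_scale inner_add_left inner_add_right
      inner_diff_right power2_eq_square algebra_simps)

lemma F_scale2: assumes X: "X \<in> p" and Y: "Y \<in> p" shows "F T N X (c *\<^sub>R Y) = c^2 * F T N X Y"
  unfolding F_def using X Y
  by (simp add: lin_scale[OF gl] lin_scale[OF gNl] lin_add[OF gNl] gm p_scale inner_add_left inner_add_right
      inner_diff_right power2_eq_square algebra_simps)

lemma met_sym: "X \<in> p \<Longrightarrow> Y \<in> p \<Longrightarrow> met T X Y = met T Y X"
  unfolding met_def using gsa by (simp add: inner_commute)

lemma met_pos: "X \<in> p \<Longrightarrow> X \<noteq> 0 \<Longrightarrow> met T X X > 0"
  unfolding met_def using gp by (simp add: pos_def)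

lemma CS: assumes X: "X \<in> p" and Y: "Y \<in> p" and ind: "independent {X, Y}" and ne: "X \<noteq> Y"
  shows "met T X X * met T Y Y - (met T X Y)^2 > 0"
proof -
  have Y0: "Y \<noteq> 0" using ind dependent_zero by blast
  define b where "b = met T Y Y"
  have b: "b > 0" using met_pos[OF Y Y0] by (simp add: b_def)
  define t where "t = met T X Y / b"
  have Zne: "X - t *\<^sub>R Y \<noteq> 0"
  proof
    assume "X - t *\<^sub>R Y = 0"
    then have "X = t *\<^sub>R Y" by simp
    then have "X \<in> span ({X, Y} - {X})" using ne by (simp add: span_base span_scale)
    then have "dependent {X, Y}" unfolding dependent_def by blast
    then show False using ind by blast
  qed
  have Z: "X - t *\<^sub>R Y \<in> p" using X Y by (simp add: p_diff p_scale)
  have "met T (X - t *\<^sub>R Y) (X - t *\<^sub>R Y) > 0" using met_pos[OF Z Zne] .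
  moreover have "met T (X - t *\<^sub>R Y) (X - t *\<^sub>R Y) = met T X X - 2 * t * met T X Y + t^2 * b"
    unfolding met_def b_def using X Y met_sym[OF X Y]
    by (simp add: lin_diff[OF gl] lin_scale[OF gl] p_scale inner_diff_left inner_diff_right met_def
       power2_eq_square algebra_simps)
  moreover have "met T X X - 2 * t * met T X Y + t^2 * b = (met T X X * b - (met T X Y)^2) / b"
    using b by (simp add: t_def field_simps power2_eq_square)
  ultimately have "(met T X X * b - (met T X Y)^2) / b > 0" by simp
  then show ?thesis using b by (simp add: b_def zero_less_divide_iff)
qed

lemma dep_cases: assumes "\<not> (independent {X, Y} \<and> X \<noteq> Y)"
  shows "X = Y \<or> (\<exists>c. X = c *\<^sub>R Y) \<or> (\<exists>c. Y = c *\<^sub>R X)"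
proof (cases "X = Y")
  case False
  then have "dependent {X, Y}" using assms by blast
  then obtain z where z: "z \<in> {X, Y}" "z \<in> span ({X, Y} - {z})" unfolding dependent_def by blast
  show ?thesis
  proof (cases "z = X")
    case True
    then have "X \<in> span {Y}" using z False by (simp add: insert_Diff_if)
    then show ?thesis by (auto simp: span_singleton)
  next
    case F: False
    then have "z = Y" using z by blast
    then have "Y \<in> span {X}" using z False by (simp add: insert_Diff_if insert_commute)
    then show ?thesis by (auto simp: span_singleton)
  qed
qed simp

lemma F_dep: assumes X: "X \<in> p" and Y: "Y \<in> p" and d: "\<not> (independent {X, Y} \<and> X \<noteq> Y)"
  shows "F T N X Y = 0"
  using dep_cases[OF d]
proof (elim disjE exE)
  assume "X = Y" then show ?thesis using F_self X by simp
next
  fix c assume "X = c *\<^sub>R Y" then show ?thesis using F_scale1[OF Y Y] F_self[OF Y] by simp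
next
  fix c assume "Y = c *\<^sub>R X" then show ?thesis using F_scale2[OF X X] F_self[OF X] by simp
qed

lemma nonneg_F: assumes nn: "nonneg_sec br h T" and X: "X \<in> p" and Y: "Y \<in> p"
  shows "F T N X Y \<ge> 0"
proof (cases "independent {X, Y} \<and> X \<noteq> Y")
  case True
  have "sec_curv br h T X Y \<ge> 0" using nn X Y True unfolding nonneg_sec_def by blast
  moreover have "met T X X * met T Y Y - (met T X Y)^2 > 0" using CS X Y True by blast
  ultimately have "met T (curv br h T X Y Y) X \<ge> 0"
    unfolding sec_curv_def by (simp add: zero_le_divide_iff)
  then show ?thesis using curv_F[OF X Y] by simp
next
  case False then show ?thesis using F_dep X Y by simp
qed

lemma F_nonneg_sec: assumes "\<forall>X\<in>p. \<forall>Y\<in>p. F T N X Y \<ge> 0" shows "nonneg_sec br h T"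
  unfolding nonneg_sec_def
proof (intro ballI impI)
  fix X Y assume X: "X \<in> p" and Y: "Y \<in> p" and i: "independent {X, Y} \<and> X \<noteq> Y"
  have "met T X X * met T Y Y - (met T X Y)^2 > 0" using CS X Y i by blast
  moreover have "met T (curv br h T X Y Y) X \<ge> 0" using curv_F[OF X Y] assms X Y by simp
  ultimately show "sec_curv br h T X Y \<ge> 0" unfolding sec_curv_def by simp
qed

end

definition Lf :: "('g \<Rightarrow> 'g) \<Rightarrow> real \<Rightarrow> real \<Rightarrow> 'g \<Rightarrow> 'g" where
  "Lf M a b X = a *\<^sub>R X + b *\<^sub>R M X"

context
  fixes P M :: "'g \<Rightarrow> 'g" and a b :: real
  assumes gP: "good P M" and a: "a \<ge> 0" and b: "b \<ge> 0" and ab: "a + b = 1"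
begin

abbreviation "L \<equiv> Lf M a b"
abbreviation "Psi \<equiv> restr_inv p L"

lemma Mi: "invp M P" using invp_sym[OF gi[OF gP]] .
lemma Ml: "lin_on M" using gNl[OF gP] .
lemma Ms: "sa M" using gNs[OF gP] .
lemma Mpos: "pos M" using invp_pos[OF gi[OF gP] gl[OF gP] gp[OF gP]] .
lemma Me: "eqv M" using invp_eqv[OF gi[OF gP] ge[OF gP]] .

lemma L_maps: "maps L" unfolding maps_def Lf_def using gm(2)[OF gP] by (simp add: p_add p_scale)
lemma L_lin: "lin_on L" unfolding lin_on_def Lf_def using Ml
  by (simp add: lin_add lin_scale algebra_simps)
lemma L_sa: "sa L" unfolding sa_def Lf_def using Ms
  by (simp add: sa_def inner_add_left inner_add_right)
lemma L_pos: "pos L" unfolding pos_def Lf_def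
proof (intro ballI impI)
  fix X assume X: "X \<in> p" "X \<noteq> 0"
  have 1: "inner X X > 0" using X by simp
  have 2: "inner (M X) X > 0" using Mpos X by (simp add: pos_def)
  have "inner (a *\<^sub>R X + b *\<^sub>R M X) X = a * inner X X + b * inner (M X) X"
    by (simp add: inner_add_left)
  moreover have "a * inner X X + b * inner (M X) X > 0"
  proof (cases "a > 0")
    case True then show ?thesis using 1 2 b by (simp add: add_pos_nonneg)
  next
    case False then have "b > 0" using a ab by simp
    then show ?thesis using 1 2 a by (simp add: add_nonneg_pos)
  qed
  ultimately show "inner (a *\<^sub>R X + b *\<^sub>R M X) X > 0" by simp
qed
lemma L_eqv: "eqv L" unfolding eqv_def Lf_def using Me by (simp add: eqv_def)

lemma L_inv: "invp L Psi" by (rule construct[OF L_maps L_lin L_pos])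

lemma Psi_good: "good Psi L"
  unfolding good_def using invp_sym[OF L_inv] invp_lin[OF L_inv L_lin] invp_sa[OF L_inv L_sa]
     invp_pos[OF L_inv L_lin L_pos] invp_eqv[OF L_inv L_eqv] by blast

lemma main_nonneg:
  assumes x: "x \<in> p" and y: "y \<in> p" and nn: "nonneg_sec br h P"
  shows "F Psi L (L x) (L y) \<ge> 0"
proof -
  have gPsi: "good Psi L" by (rule Psi_good)
  have Mx: "M x \<in> p" and My: "M y \<in> p" using x y gm(2)[OF gP] by auto
  have PMx: "P (M x) = x" and PMy: "P (M y) = y" using x y ginv(1)[OF gP] by auto
  have Lx: "L x \<in> p" and Ly: "L y \<in> p" using x y L_maps by (auto simp: maps_def)
  have PsiLx: "Psi (L x) = x" and PsiLy: "Psi (L y) = y" using x y ginv(1)[OF gPsi] by auto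
  define c where "c = br x y"
  define a1 where "a1 = br (M x) y"
  define a2 where "a2 = br x (M y)"
  define e where "e = br (M x) (M y)"
  define u where "u = br (M x) x"
  define v where "v = br (M y) y"
  define f where "f = a1 - a2"
  define d where "d = a1 + a2"
  define E where "E = pp e"
  define g where "g = a *\<^sub>R c + b *\<^sub>R d"
  define gp where "gp = pp g"
  define gh where "gh = g - gp"
  define W where "W = pp (br (L x) (L y))"
  define w where "w = Psi W"
  have E: "E \<in> p" and gpin: "gp \<in> p" and W: "W \<in> p" by (simp_all add: E_def gp_def W_def)
  have w: "w \<in> p" using W gm(1)[OF gPsi] by (simp add: w_def)
  have Lw: "L w = W" using W ginv(2)[OF gPsi] by (simp add: w_def)
  have Mw: "M w \<in> p" and PMw: "P (M w) = w" using w gm(2)[OF gP] ginv(1)[OF gP] by auto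
  have f_p: "f \<in> p"
  proof -
    have "inner f z = 0" if z: "z \<in> h" for z
    proof -
      have zy: "br z y \<in> p" using br_hp z y by simp
      have "inner a2 z = inner x (br (M y) z)" unfolding a2_def by (rule adinv)
      also have "br (M y) z = - M (br z y)"
        using geq[OF gP] Me z y br_anti[of "M y" z] by (simp add: eqv_def)
      also have "inner x (- M (br z y)) = - inner (M x) (br z y)"
        using Ms x zy by (simp add: sa_def)
      also have "\<dots> = inner (M x) (br y z)" using br_anti[of z y] by simp
      also have "\<dots> = inner a1 z" unfolding a1_def by (rule adinv[symmetric])
      finally show ?thesis by (simp add: f_def inner_diff_left)
    qed
    then show ?thesis by (simp add: ortho_compl_def)
  qed
  have uv_p: "u \<in> p" "v \<in> p"
  proof -
    have gen: "br (M q) q \<in> p" if q: "q \<in> p" for q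
    proof -
      have "inner (br (M q) q) z = 0" if z: "z \<in> h" for z
      proof -
        have zq: "br z q \<in> p" using br_hp z q by simp
        have "inner (br (M q) q) z = inner (M q) (br q z)" by (rule adinv)
        also have "\<dots> = - inner (M q) (br z q)" using br_anti[of z q] by simp
        also have "\<dots> = - inner q (M (br z q))" using Ms q zq by (simp add: sa_def)
        also have "M (br z q) = br z (M q)" using Me z q by (simp add: eqv_def)
        also have "- inner q (br z (M q)) = inner q (br (M q) z)" using br_anti[of "M q" z] by simp
        also have "\<dots> = inner (br q (M q)) z" by (rule adinv[symmetric])
        also have "\<dots> = - inner (br (M q) q) z" using br_anti[of "M q" q] by simp
        finally show ?thesis by simp
      qed
      then show ?thesis by (simp add: ortho_compl_def)
    qed
    show "u \<in> p" using gen[OF x] by (simp add: u_def)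
    show "v \<in> p" using gen[OF y] by (simp add: v_def)
  qed
  have R3: "inner e c - inner u v = inner a2 a1"
  proof -
    have J: "br (M y) c - br x v - br y a2 = 0"
      using jacobi[of "M y" x y] unfolding c_def v_def a2_def
      using br_anti[of "M y" y] br_anti[of "M y" x] by (simp add: algebra_simps)
    have 1: "inner e c = inner (M x) (br (M y) c)" unfolding e_def by (rule adinv)
    have 2: "inner u v = inner (M x) (br x v)" unfolding u_def by (rule adinv)
    have 3: "inner a2 a1 = inner (M x) (br y a2)" unfolding a1_def
      by (subst inner_commute) (rule adinv)
    have "br (M y) c = br x v + br y a2" using J by (simp add: algebra_simps)
    then show ?thesis unfolding 1 2 3 by (simp add: inner_add_right)
  qed

  have S_eq: "br (L x) (Psi (L y)) + br (L y) (Psi (L x)) = b *\<^sub>R f"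
    unfolding PsiLx PsiLy unfolding Lf_def f_def a1_def a2_def
    using br_anti[of y x] br_anti[of "M y" x] by (simp add: algebra_simps)
  have ppf: "pp f = f" using f_p by (rule pp_id)
  have t1: "inner (L (pp (br (L x) (Psi (L y)) + br (L y) (Psi (L x)))))
                 (br (L x) (Psi (L y)) + br (L y) (Psi (L x)))
      = a * b^2 * inner f f + b^3 * inner (M f) f"
    unfolding S_eq using f_p
    by (simp add: ppf Lf_def lin_scale[OF Ml] inner_add_left power2_eq_square power3_eq_cube algebra_simps
        del: pp_add pp_diff)
  have Lyy: "br (L y) (Psi (L y)) = b *\<^sub>R v" unfolding PsiLy unfolding Lf_def v_def by simp
  have Lxx: "br (L x) (Psi (L x)) = b *\<^sub>R u" unfolding PsiLx unfolding Lf_def u_def by simp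
  have t2: "inner (L (pp (br (L y) (Psi (L y))))) (br (L x) (Psi (L x)))
      = a * b^2 * inner v u + b^3 * inner (M v) u"
    unfolding Lyy Lxx using uv_p
    by (simp add: pp_id Lf_def lin_scale[OF Ml] inner_add_left power2_eq_square power3_eq_cube algebra_simps)
  have B_eq: "br (L x) (L y) = a^2 *\<^sub>R c + (a * b) *\<^sub>R d + b^2 *\<^sub>R e"
    unfolding Lf_def c_def d_def e_def a1_def a2_def by (simp add: algebra_simps power2_eq_square)
  have D_eq: "br (L x) (Psi (L y)) - br (L y) (Psi (L x)) = (2 * a) *\<^sub>R c + b *\<^sub>R d"
    unfolding PsiLx PsiLy unfolding Lf_def c_def d_def a1_def a2_def
    using br_anti[of y x] br_anti[of "M y" x] by (simp add: algebra_simps) (metis mult_2 scaleR_left_distrib mult.commute)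
  have W_eq: "W = a *\<^sub>R gp + b^2 *\<^sub>R E"
    unfolding W_def B_eq gp_def g_def E_def by (simp add: algebra_simps power2_eq_square)
  have F_L: "F Psi L (L x) (L y) = (1/4) * (a * b^2 * inner f f + b^3 * inner (M f) f)
      - (a * b^2 * inner v u + b^3 * inner (M v) u) - (3/4) * inner w W
      + (1/2) * inner (a^2 *\<^sub>R c + (a * b) *\<^sub>R d + b^2 *\<^sub>R e) ((2 * a) *\<^sub>R c + b *\<^sub>R d)"
    unfolding F_def t1 t2 D_eq using B_eq by (simp add: w_def W_def)
  have F_P: "F P M (M x) (M y) = (1/4) * inner (M f) f - inner (M v) u - (3/4) * inner (P E) E
      + (1/2) * inner e d"
  proof -
    have "br (M x) (P (M y)) + br (M y) (P (M x)) = f"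
      unfolding PMx PMy f_def a1_def a2_def using br_anti[of "M y" x] by simp
    moreover have "br (M x) (P (M y)) - br (M y) (P (M x)) = d"
      unfolding PMx PMy d_def a1_def a2_def using br_anti[of "M y" x] by simp
    moreover have ppv: "pp (br (M y) y) = br (M y) y" using uv_p(2) pp_id unfolding v_def by blast
    ultimately show ?thesis unfolding F_def using ppf
      by (simp add: PMx PMy u_def v_def E_def e_def)
  qed
  have gap: "a * inner (gp - w) (gp - w) + b * inner (P (b *\<^sub>R E - M w)) (b *\<^sub>R E - M w)
      = a * inner gp gp + b^3 * inner (P E) E - inner w W"
  proof -
    have PE: "P (b *\<^sub>R E - M w) = b *\<^sub>R P E - w"
      using E Mw PMw by (simp add: lin_diff[OF gl[OF gP]] lin_scale[OF gl[OF gP]] p_scale)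
    have s1: "inner (P E) (M w) = inner E w" using gsa[OF gP E Mw] PMw by simp
    have s2: "inner w (M w) = inner (M w) w" by (rule inner_commute)
    have WW: "inner w W = a * inner w gp + b^2 * inner w E" by (simp add: W_eq inner_add_right)
    have Lw': "W = a *\<^sub>R w + b *\<^sub>R M w" using Lw by (simp add: Lf_def)
    have ww: "inner w W = a * inner w w + b * inner w (M w)" by (simp add: Lw' inner_add_right)
    show ?thesis unfolding PE
      using WW ww s1 by (simp add: inner_diff_left inner_diff_right inner_commute power2_eq_square
          power3_eq_cube algebra_simps)
  qed
  have gsplit: "inner g g = inner gp gp + inner gh gh"
  proof -
    have "inner gp gh = 0" unfolding gh_def gp_def
      using inner_ph[OF pp_in pp_h] .
    then show ?thesis unfolding gh_def
      by (simp add: inner_diff_left inner_diff_right inner_commute)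
  qed
  have ffdd: "inner f f - inner d d = - 4 * inner a2 a1"
    unfolding f_def d_def by (simp add: inner_add_left inner_add_right inner_diff_left inner_diff_right inner_commute)
  have gg: "inner g g = a^2 * inner c c + 2 * a * b * inner c d + b^2 * inner d d"
    unfolding g_def by (simp add: inner_add_left inner_add_right inner_commute power2_eq_square algebra_simps)
  have T4: "inner (a^2 *\<^sub>R c + (a * b) *\<^sub>R d + b^2 *\<^sub>R e) ((2 * a) *\<^sub>R c + b *\<^sub>R d)
     = 2 * a^3 * inner c c + 3 * a^2 * b * inner c d + a * b^2 * inner d d + 2 * a * b^2 * inner e c
       + b^3 * inner e d"
    by (simp add: inner_add_left inner_add_right inner_commute power2_eq_square power3_eq_cube algebra_simps)
  have vu: "inner v u = inner u v" by (rule inner_commute)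
  have ident: "F Psi L (L x) (L y) = (1/4) * a^3 * inner c c + b^3 * F P M (M x) (M y)
     + (3/4) * (a * inner gh gh + (a * inner (gp - w) (gp - w) + b * inner (P (b *\<^sub>R E - M w)) (b *\<^sub>R E - M w)))"
  proof -
    have X1: "inner gh gh = a^2 * inner c c + 2*a*b*inner c d + b^2 * inner d d - inner gp gp"
      using gsplit gg by simp
    have X2: "inner d d = inner f f + 4 * inner a2 a1" using ffdd by simp
    have X3: "inner e c = inner a2 a1 + inner u v" using R3 by simp
    show ?thesis unfolding F_L F_P gap T4 vu X1 X3 unfolding X2
      by (simp add: algebra_simps power2_eq_square power3_eq_cube)
  qed
  have pnn: "inner (P v) v \<ge> 0" if "v \<in> p" for v
  proof (cases "v = 0")
    case True then show ?thesis using lin_zero[OF gl[OF gP]] by simp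
  next
    case False then show ?thesis using gp[OF gP] that by (simp add: pos_def less_imp_le)
  qed
  have v1: "b *\<^sub>R E - M w \<in> p" using E Mw by (simp add: p_diff p_scale)
  have "F P M (M x) (M y) \<ge> 0" using nonneg_F[OF gP nn Mx My] .
  moreover have "inner (P (b *\<^sub>R E - M w)) (b *\<^sub>R E - M w) \<ge> 0" using pnn[OF v1] .
  ultimately show ?thesis unfolding ident using a b
    by (intro add_nonneg_nonneg mult_nonneg_nonneg) auto
qed

lemma path_nonneg: assumes nn: "nonneg_sec br h P" shows "nonneg_sec br h Psi"
proof -
  have gPsi: "good Psi L" by (rule Psi_good)
  show ?thesis
  proof (rule F_nonneg_sec[OF gPsi], intro ballI)
    fix X Y assume X: "X \<in> p" and Y: "Y \<in> p"
    have "F Psi L (L (Psi X)) (L (Psi Y)) \<ge> 0"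
      using main_nonneg[OF gm(1)[OF gPsi X] gm(1)[OF gPsi Y] nn] .
    then show "F Psi L X Y \<ge> 0" using ginv(2)[OF gPsi X] ginv(2)[OF gPsi Y] by simp
  qed
qed

end

end

theorem proposition1p1:
  fixes br :: "'g::euclidean_space \<Rightarrow> 'g \<Rightarrow> 'g"
    and h :: "'g set"
    and Phi :: "'g \<Rightarrow> 'g"
  assumes lie: "lie_bracket br"
    and biinv: "ad_invariant br"
    and h_sub: "subspace h"
    and h_alg: "\<forall>X\<in>h. \<forall>Y\<in>h. br X Y \<in> h"
    and Phi_lin: "linear Phi"
    and Phi_p: "\<forall>X\<in>ortho_compl h. Phi X \<in> ortho_compl h"
    and Phi_sa: "\<forall>X\<in>ortho_compl h. \<forall>Y\<in>ortho_compl h. inner (Phi X) Y = inner X (Phi Y)"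
    and Phi_pos: "\<forall>X\<in>ortho_compl h. X \<noteq> 0 \<longrightarrow> inner (Phi X) X > 0"
    and Phi_equiv: "\<forall>Z\<in>h. \<forall>X\<in>ortho_compl h. Phi (br Z X) = br Z (Phi X)"
    and nonneg: "nonneg_sec br h Phi"
  shows "\<forall>s\<in>{0..1::real}. nonneg_sec br h (inv_lin_path (ortho_compl h) Phi s)"
proof
  fix s :: real assume s: "s \<in> {0..1}"
  interpret LA br h using lie biinv h_sub h_alg by unfold_locales
  have m: "maps Phi" using Phi_p by (simp add: maps_def)
  have l: "lin_on Phi" using Phi_lin by (simp add: lin_on_def linear_add linear_scale)
  have ps: "pos Phi" using Phi_pos by (simp add: pos_def)
  have gP: "good Phi (restr_inv (ortho_compl h) Phi)"
    unfolding good_def using construct[OF m l ps] l Phi_sa Phi_equiv ps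
    by (simp add: sa_def eqv_def)
  have "nonneg_sec br h (restr_inv (ortho_compl h) (Lf (restr_inv (ortho_compl h) Phi) (1 - s) s))"
    using path_nonneg[OF gP _ _ _ nonneg] s by simp
  moreover have "Lf (restr_inv (ortho_compl h) Phi) (1 - s) s =
      (\<lambda>X. (1 - s) *\<^sub>R X + s *\<^sub>R restr_inv (ortho_compl h) Phi X)"
    by (simp add: Lf_def fun_eq_iff)
  ultimately show "nonneg_sec br h (inv_lin_path (ortho_compl h) Phi s)"
    by (simp add: inv_lin_path_def)
qed

end
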